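(* Let $N, D$ be positive integers and fix $\varsigma>0$. Let $\mathcal{G}$ be the complete graph on $N$ nodes, let $\tilde{\mathbf{A}} = \big(\mathbb{1}_{i\sim j \vee i=j}/\sqrt{\deg(v_i)\deg(v_j)}\big)_{i,j=1}^N$, and let $\mathbf{W}$ be a $D\times D$ random matrix with i.i.d. entries $W_{i,j}\sim N(0,\varsigma^2)$. If $\varsigma < 1/(9D^{3/2})$, then the map $\mathcal{L}^{\mathrm{conv+r}}_{\mathcal{G},\mathbf{W}}:\mathbb{R}^{N\times D}\to\mathbb{R}^{N\times D}$, $\mathbf{X}\mapsto \tilde{\mathbf{A}}\mathbf{X}\mathbf{W} + \mathbf{X}$, is injective with probability at least $1 - e^{-D/2}$.
   Context: $i\sim j$ means $v_i$ and $v_j$ are adjacent; degrees count the self-loop, so that for the complete graph every entry of $\tilde{\mathbf{A}}$ equals $1/N$. *)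

theory Defs
  imports "HOL-Probability.Probability"
begin

text \<open>Matrices are functions nat => nat => real, meaningful on the
  index box; an N x D matrix is one vanishing outside {..<N} x {..<D}.\<close>

definition complete_graph :: "nat \<Rightarrow> nat \<Rightarrow> nat \<Rightarrow> bool" where
  "complete_graph N i j \<longleftrightarrow> i < N \<and> j < N \<and> i \<noteq> j"

definition deg_sl :: "nat \<Rightarrow> (nat \<Rightarrow> nat \<Rightarrow> bool) \<Rightarrow> nat \<Rightarrow> nat" where
  "deg_sl N E i = card {j. j < N \<and> (E i j \<or> i = j)}"

definition norm_adj :: "nat \<Rightarrow> (nat \<Rightarrow> nat \<Rightarrow> bool) \<Rightarrow> nat \<Rightarrow> nat \<Rightarrow> real" where
  "norm_adj N E i j =
     (if i < N \<and> j < N \<and> (E i j \<or> i = j)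
      then 1 / sqrt (real (deg_sl N E i) * real (deg_sl N E j)) else 0)"

definition mats :: "nat \<Rightarrow> nat \<Rightarrow> (nat \<Rightarrow> nat \<Rightarrow> real) set" where
  "mats n m = {X. \<forall>i j. \<not> (i < n \<and> j < m) \<longrightarrow> X i j = 0}"

definition conv_res ::
  "nat \<Rightarrow> nat \<Rightarrow> (nat \<Rightarrow> nat \<Rightarrow> real) \<Rightarrow> (nat \<times> nat \<Rightarrow> real) \<Rightarrow>
   (nat \<Rightarrow> nat \<Rightarrow> real) \<Rightarrow> (nat \<Rightarrow> nat \<Rightarrow> real)" where
  "conv_res N D A W X = (\<lambda>i j. if i < N \<and> j < D then
      (\<Sum>k<N. \<Sum>l<D. A i k * X k l * W (l, j)) + X i j else 0)"

definition gauss_mat :: "nat \<Rightarrow> real \<Rightarrow> (nat \<times> nat \<Rightarrow> real) measure" where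
  "gauss_mat D s = PiM ({..<D} \<times> {..<D}) (\<lambda>_. density lborel (normal_density 0 s))"

end

theory Submission
  imports Defs "Jordan_Normal_Form.Determinant"
begin

lemma tail:
  fixes s t :: real and k :: nat
  assumes s: "0 < s" and t: "0 < t" and k: "0 < k"
  shows "measure (density lborel (normal_density 0 s)) {x. t \<le> \<bar>x\<bar>}
     \<le> (fact (2 * k) / ((2 / s\<^sup>2)^k * fact k)) / t ^ (2*k)"
proof -
  let ?G = "density lborel (normal_density 0 s)"
  have hb: "has_bochner_integral ?G (\<lambda>x. x ^ (2*k)) (fact (2 * k) / ((2 / s\<^sup>2)^k * fact k))"
    apply (rule has_bochner_integral_density)
    using normal_moment_even[OF s, of 0 k] by auto
  have "measure ?G {x\<in>space ?G. x ^ (2*k) \<ge> t ^ (2*k)} \<le> (\<integral>x. x ^ (2*k) \<partial>?G) / t ^ (2*k)"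
    apply (rule integral_Markov_inequality_measure[where A="space ?G"])
    using hb t by (auto simp: has_bochner_integral_iff zero_le_even_power)
  moreover have "{x\<in>space ?G. x ^ (2*k) \<ge> t ^ (2*k)} = {x. t \<le> \<bar>x\<bar>}"
  proof -
    have "x ^ (2*k) \<ge> t ^ (2*k) \<longleftrightarrow> t \<le> \<bar>x\<bar>" for x
    proof -
      have "x ^ (2*k) = \<bar>x\<bar> ^ (2*k)" by (simp add: power_even_abs)
      moreover have "\<bar>x\<bar> ^ (2*k) \<ge> t ^ (2*k) \<longleftrightarrow> t \<le> \<bar>x\<bar>"
        using t k by (intro power_mono_iff) auto
      ultimately show ?thesis by simp
    qed
    then show ?thesis by auto
  qed
  ultimately show ?thesis using hb by (simp add: has_bochner_integral_iff)
qed


lemma numeric: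
  fixes D :: nat and s r :: real
  assumes D: "0 < D" and s: "0 < s" and sD: "s < 1 / (9 * real D powr (3/2))"
    and r0: "0 \<le> r" and r: "r \<le> (fact (2 * D) / ((2 / s\<^sup>2)^D * fact D)) / (1 / real D) ^ (2*D)"
  shows "real (D * D) * r \<le> exp (- real D / 2)"
proof -
  have "fact (2*D) = fact D * (fact (2*D) div fact D :: nat)"
    by (simp add: fact_dvd)
  also have "\<dots> \<le> fact D * (2*D)^D"
    using fact_div_fact_le_pow[of D "2*D"] by (intro mult_left_mono) auto
  finally have f0: "fact (2*D) \<le> fact D * (2*D)^D" .
  have f: "(fact (2*D) :: real) \<le> fact D * (2 * real D)^D"
  proof -
    have "real (fact (2*D)) \<le> real (fact D * (2*D)^D)" using f0 by (rule of_nat_mono)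
    then show ?thesis by (simp add: of_nat_fact)
  qed
  have eq: "(fact (2 * D) / ((2 / s\<^sup>2)^D * fact D)) / (1 / real D) ^ (2*D)
     = fact (2 * D) * (s\<^sup>2 * real D ^ 2 / 2) ^ D / fact D"
    using D s by (simp add: power_divide power_mult_distrib power_mult field_simps flip: power_mult)
  have "fact (2 * D) * (s\<^sup>2 * real D ^ 2 / 2) ^ D / fact D
     \<le> fact D * (2 * real D)^D * (s\<^sup>2 * real D ^ 2 / 2) ^ D / fact D"
    by (intro divide_right_mono mult_right_mono f) auto
  also have "\<dots> = (2 * real D)^D * (s\<^sup>2 * real D ^ 2 / 2) ^ D"
    by simp
  also have "\<dots> = (2 * real D * (s\<^sup>2 * real D ^ 2 / 2)) ^ D"
    by (rule power_mult_distrib[symmetric])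
  also have "\<dots> = (s\<^sup>2 * real D ^ 3) ^ D"
    by (simp add: power2_eq_square power3_eq_cube mult_ac)
  finally have r1: "r \<le> (s\<^sup>2 * real D ^ 3) ^ D" using r eq by simp
  have pw: "(real D powr (3/2))\<^sup>2 = real D ^ 3"
  proof -
    have "(real D powr (3/2))\<^sup>2 = (real D powr (3/2)) powr 2"
      using D by (simp add: powr_realpow)
    also have "\<dots> = real D powr 3" by (simp add: powr_powr)
    also have "\<dots> = real D ^ 3" using D by (simp add: powr_realpow)
    finally show ?thesis .
  qed
  have "s * (9 * real D powr (3/2)) < 1" using sD D by (simp add: field_simps)
  moreover have "0 \<le> s * (9 * real D powr (3/2))" using s by simp
  ultimately have "(s * (9 * real D powr (3/2)))\<^sup>2 < 1\<^sup>2"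
    by (intro power_strict_mono) auto
  then have "s\<^sup>2 * real D ^ 3 * 81 < 1" using pw by (simp add: power_mult_distrib)
  then have c: "s\<^sup>2 * real D ^ 3 \<le> 1/81" by simp
  have "(s\<^sup>2 * real D ^ 3) ^ D \<le> (1/81) ^ D" using c s by (intro power_mono) auto
  with r1 have r2: "r \<le> (1/81)^D" by simp
  have "D < 2 ^ D" by (rule less_exp)
  then have "D * D \<le> 2^D * 2^D" by (intro mult_mono) auto
  also have "\<dots> = 4 ^ D" by (simp flip: power_mult_distrib)
  finally have d4: "real (D * D) \<le> 4 ^ D"
    by (metis of_nat_le_iff of_nat_numeral of_nat_power)
  have "real (D * D) * r \<le> 4 ^ D * (1/81)^D"
    using d4 r2 r0 by (intro mult_mono) auto
  also have "\<dots> = (4/81)^D" by (simp add: power_divide)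
  also have "\<dots> \<le> exp (- 1/2) ^ D"
  proof (rule power_mono)
    show "4/81 \<le> exp (- 1/2::real)" using exp_ge_add_one_self[of "-1/2::real"] by simp
  qed simp
  also have "\<dots> = exp (- real D / 2)" by (simp add: exp_of_nat_mult[symmetric])
  finally show ?thesis .
qed

definition Pker :: "nat \<Rightarrow> (nat \<times> nat \<Rightarrow> real) \<Rightarrow> bool" where
  "Pker D W \<longleftrightarrow> (\<forall>v. (\<forall>j<D. v j + (\<Sum>l<D. W (l, j) * v l) = 0) \<longrightarrow> (\<forall>j<D. v j = 0))"

lemma adj_complete: "i < N \<Longrightarrow> k < N \<Longrightarrow> norm_adj N (complete_graph N) i k = 1 / real N"
proof -
  assume i: "i < N" and k: "k < N"
  have "deg_sl N (complete_graph N) x = N" if "x < N" for x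
  proof -
    have "{j. j < N \<and> (complete_graph N x j \<or> x = j)} = {..<N}"
      using that by (auto simp: complete_graph_def)
    then show ?thesis by (simp add: deg_sl_def)
  qed
  then show ?thesis using i k by (simp add: norm_adj_def real_sqrt_mult complete_graph_def)
qed

lemma conv_res_eq:
  assumes "i < N" "j < D"
  shows "conv_res N D (norm_adj N (complete_graph N)) W X i j
     = (\<Sum>l<D. ((\<Sum>k<N. X k l) / real N) * W (l, j)) + X i j"
proof -
  have "(\<Sum>k<N. \<Sum>l<D. norm_adj N (complete_graph N) i k * X k l * W (l, j))
      = (\<Sum>k<N. \<Sum>l<D. (X k l * W (l, j)) / real N)"
    using assms by (intro sum.cong refl) (simp add: adj_complete)
  also have "\<dots> = (\<Sum>l<D. \<Sum>k<N. (X k l * W (l, j)) / real N)" by (rule sum.swap)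
  also have "\<dots> = (\<Sum>l<D. ((\<Sum>k<N. X k l) / real N) * W (l, j))"
    by (simp add: sum_distrib_right sum_divide_distrib)
  finally show ?thesis using assms by (simp add: conv_res_def)
qed

lemma inj_iff_Pker:
  assumes N: "0 < N"
  shows "inj_on (conv_res N D (norm_adj N (complete_graph N)) W) (mats N D) \<longleftrightarrow> Pker D W"
proof
  assume inj: "inj_on (conv_res N D (norm_adj N (complete_graph N)) W) (mats N D)"
  show "Pker D W" unfolding Pker_def
  proof (rule allI, rule impI)
    fix v :: "nat \<Rightarrow> real" assume v: "\<forall>j<D. v j + (\<Sum>l<D. W (l, j) * v l) = 0"
    define X where "X = (\<lambda>i j. if i < N \<and> j < D then v j else (0::real))"
    have X: "X \<in> mats N D" by (simp add: X_def mats_def)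
    have Z: "(\<lambda>i j. 0::real) \<in> mats N D" by (simp add: mats_def)
    have "conv_res N D (norm_adj N (complete_graph N)) W X = conv_res N D (norm_adj N (complete_graph N)) W (\<lambda>i j. 0)"
    proof (intro ext)
      fix i j
      show "conv_res N D (norm_adj N (complete_graph N)) W X i j = conv_res N D (norm_adj N (complete_graph N)) W (\<lambda>i j. 0) i j"
      proof (cases "i < N \<and> j < D")
        case True
        have "(\<Sum>l<D. ((\<Sum>k<N. X k l) / real N) * W (l, j)) = (\<Sum>l<D. W (l, j) * v l)"
          using N by (intro sum.cong refl) (simp add: X_def)
        moreover have "v j + (\<Sum>l<D. W (l, j) * v l) = 0" using True v by simp
        ultimately show ?thesis using True by (simp add: conv_res_eq X_def)
      next
        case False
        then show ?thesis unfolding conv_res_def by auto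
      qed
    qed
    then have "X = (\<lambda>i j. 0)" using inj X Z by (auto dest: inj_onD)
    then have "\<forall>j. X 0 j = 0" by simp
    then show "\<forall>j<D. v j = 0"
    proof (intro allI impI)
      fix j assume "\<forall>j. X 0 j = 0" "j < D"
      then have "X 0 j = 0" by blast
      then show "v j = 0" using N \<open>j < D\<close> by (simp add: X_def)
    qed
  qed
next
  assume P: "Pker D W"
  show "inj_on (conv_res N D (norm_adj N (complete_graph N)) W) (mats N D)"
  proof (rule inj_onI)
    fix X Y assume X: "X \<in> mats N D" and Y: "Y \<in> mats N D"
      and eq: "conv_res N D (norm_adj N (complete_graph N)) W X = conv_res N D (norm_adj N (complete_graph N)) W Y"
    define v where "v l = (\<Sum>k<N. X k l - Y k l) / real N" for l
    have diff: "X i j - Y i j = - (\<Sum>l<D. v l * W (l, j))" if "i < N" "j < D" for i j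
    proof -
      have "(\<Sum>l<D. ((\<Sum>k<N. X k l) / real N) * W (l, j)) + X i j
          = (\<Sum>l<D. ((\<Sum>k<N. Y k l) / real N) * W (l, j)) + Y i j"
        using conv_res_eq[OF that, of W X] conv_res_eq[OF that, of W Y] eq by simp
      moreover have "(\<Sum>l<D. v l * W (l, j)) = (\<Sum>l<D. ((\<Sum>k<N. X k l) / real N) * W (l, j)) - (\<Sum>l<D. ((\<Sum>k<N. Y k l) / real N) * W (l, j))"
        by (simp add: v_def diff_divide_distrib left_diff_distrib sum_subtractf)
      ultimately show ?thesis by linarith
    qed
    have "\<forall>j<D. v j + (\<Sum>l<D. W (l, j) * v l) = 0"
    proof (intro allI impI)
      fix j assume j: "j < D"
      have "v j = (\<Sum>k<N. X k j - Y k j) / real N" by (simp add: v_def)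
      also have "\<dots> = (\<Sum>k<N. - (\<Sum>l<D. v l * W (l, j))) / real N"
        using diff j by (intro arg_cong[where f="\<lambda>x. x / real N"] sum.cong) auto
      also have "\<dots> = - (\<Sum>l<D. W (l, j) * v l)" using N by (simp add: mult.commute)
      finally show "v j + (\<Sum>l<D. W (l, j) * v l) = 0" by simp
    qed
    with P have v0: "\<forall>j<D. v j = 0" by (simp add: Pker_def)
    show "X = Y"
    proof (intro ext)
      fix i j show "X i j = Y i j"
      proof (cases "i < N \<and> j < D")
        case True then show ?thesis using diff[of i j] v0 by simp
      next
        case False then show ?thesis using X Y by (simp add: mats_def)
      qed
    qed
  qed
qed

definition Mt :: "nat \<Rightarrow> (nat \<times> nat \<Rightarrow> real) \<Rightarrow> real mat" where
  "Mt D W = mat D D (\<lambda>(j,l). (if j = l then 1 else 0) + W (l, j))"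

lemma Mt_carrier: "Mt D W \<in> carrier_mat D D" by (simp add: Mt_def)

lemma Mt_mult: assumes "v \<in> carrier_vec D" "j < D"
  shows "(Mt D W *\<^sub>v v) $ j = v $ j + (\<Sum>l<D. W (l, j) * v $ l)"
proof -
  have "(Mt D W *\<^sub>v v) $ j = (\<Sum>l\<in>{0..<D}. ((if j = l then 1 else 0) + W (l, j)) * v $ l)"
    using assms by (simp add: Mt_def scalar_prod_def)
  also have "\<dots> = (\<Sum>l\<in>{0..<D}. (if j = l then v $ l else 0) + W (l, j) * v $ l)"
    by (intro sum.cong refl) (simp add: distrib_right)
  also have "\<dots> = (\<Sum>l\<in>{0..<D}. (if j = l then v $ l else 0)) + (\<Sum>l\<in>{0..<D}. W (l, j) * v $ l)"
    by (rule sum.distrib)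
  also have "\<dots> = v $ j + (\<Sum>l<D. W (l, j) * v $ l)"
    using assms by (simp add: lessThan_atLeast0)
  finally show ?thesis .
qed

lemma Pker_det: "Pker D W \<longleftrightarrow> det (Mt D W) \<noteq> 0"
proof
  assume P: "Pker D W"
  show "det (Mt D W) \<noteq> 0"
  proof
    assume "det (Mt D W) = 0"
    then obtain v where v: "v \<in> carrier_vec D" "v \<noteq> 0\<^sub>v D" "Mt D W *\<^sub>v v = 0\<^sub>v D"
      using det_0_iff_vec_prod_zero[OF Mt_carrier] by blast
    have "\<forall>j<D. (\<lambda>l. v $ l) j + (\<Sum>l<D. W (l, j) * (\<lambda>l. v $ l) l) = 0"
    proof (intro allI impI)
      fix j assume j: "j < D"
      have "(Mt D W *\<^sub>v v) $ j = 0" using v(3) j by simp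
      then show "(\<lambda>l. v $ l) j + (\<Sum>l<D. W (l, j) * (\<lambda>l. v $ l) l) = 0"
        using Mt_mult[OF v(1) j] by simp
    qed
    with P have "\<forall>j<D. v $ j = 0" unfolding Pker_def by blast
    then have "v = 0\<^sub>v D" using v(1) by (intro eq_vecI) auto
    with v(2) show False by simp
  qed
next
  assume d: "det (Mt D W) \<noteq> 0"
  show "Pker D W" unfolding Pker_def
  proof (rule allI, rule impI, rule ccontr)
    fix f :: "nat \<Rightarrow> real" assume f: "\<forall>j<D. f j + (\<Sum>l<D. W (l, j) * f l) = 0"
      and nz: "\<not> (\<forall>j<D. f j = 0)"
    define v where "v = vec D f"
    have vc: "v \<in> carrier_vec D" by (simp add: v_def)
    have "v \<noteq> 0\<^sub>v D" using nz by (auto simp: v_def vec_eq_iff)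
    moreover have "Mt D W *\<^sub>v v = 0\<^sub>v D"
    proof (rule eq_vecI)
      fix j assume "j < dim_vec (0\<^sub>v D :: real vec)"
      then have j: "j < D" by simp
      have "(\<Sum>l<D. W (l, j) * v $ l) = (\<Sum>l<D. W (l, j) * f l)"
        by (intro sum.cong) (auto simp: v_def)
      then show "(Mt D W *\<^sub>v v) $ j = 0\<^sub>v D $ j"
        using Mt_mult[OF vc j] f j by (simp add: v_def)
    qed (simp add: Mt_def)
    ultimately have "det (Mt D W) = 0"
      using det_0_iff_vec_prod_zero[OF Mt_carrier] vc by blast
    with d show False by simp
  qed
qed

lemma det_Mt_eq: "det (Mt D W) = (\<Sum>p\<in>{p. p permutes {0..<D}}. signof p *
   (\<Prod>i\<in>{0..<D}. ((if i = p i then 1 else 0) + W (p i, i))))"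
  unfolding det_def'[OF Mt_carrier]
proof (intro sum.cong refl arg_cong[where f="\<lambda>x. signof _ * x"] prod.cong)
  fix p i assume p: "p \<in> {p. p permutes {0..<D}}" and i: "i \<in> {0..<D}"
  then have "p i < D" using permutes_in_image by fastforce
  then show "Mt D W $$ (i, p i) = (if i = p i then 1 else 0) + W (p i, i)"
    using i by (simp add: Mt_def)
qed

lemma det_Mt_meas: "(\<lambda>W. det (Mt D W)) \<in> borel_measurable (gauss_mat D s)"
  unfolding det_Mt_eq gauss_mat_def
proof (intro borel_measurable_sum borel_measurable_times borel_measurable_prod borel_measurable_add)
  fix p i assume p: "p \<in> {p. p permutes {0..<D}}" and i: "i \<in> {0..<D}"
  then have "p i < D" using permutes_in_image by fastforce
  then have "(p i, i) \<in> {..<D} \<times> {..<D}" using i by auto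
  then show "(\<lambda>x. x (p i, i)) \<in> borel_measurable (PiM ({..<D} \<times> {..<D}) (\<lambda>_. density lborel (normal_density 0 s)))"
    by measurable
qed auto

lemma box_Pker:
  assumes D: "0 < D" and b: "\<forall>l<D. \<forall>j<D. \<bar>W (l, j)\<bar> < 1 / real D"
  shows "Pker D W"
  unfolding Pker_def
proof (rule allI, rule impI)
  fix v :: "nat \<Rightarrow> real" assume v: "\<forall>j<D. v j + (\<Sum>l<D. W (l, j) * v l) = 0"
  define M where "M = Max ((\<lambda>j. \<bar>v j\<bar>) ` {..<D})"
  have Mge: "\<bar>v j\<bar> \<le> M" if "j < D" for j using that by (auto simp: M_def)
  have "M \<in> (\<lambda>j. \<bar>v j\<bar>) ` {..<D}" unfolding M_def using D by (intro Max_in) auto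
  then obtain j0 where j0: "j0 < D" "\<bar>v j0\<bar> = M" by auto
  have "M \<le> 0"
  proof (rule ccontr)
    assume "\<not> M \<le> 0" then have Mp: "M > 0" by simp
    have "M = \<bar>\<Sum>l<D. W (l, j0) * v l\<bar>" using v j0 by (metis abs_minus_cancel add_eq_0_iff)
    also have "\<dots> \<le> (\<Sum>l<D. \<bar>W (l, j0)\<bar> * \<bar>v l\<bar>)" by (rule order_trans[OF sum_abs]) (simp add: abs_mult)
    also have "\<dots> < (\<Sum>l<D. (1 / real D) * M)"
    proof (rule sum_strict_mono)
      fix l assume l: "l \<in> {..<D}"
      have "\<bar>W (l, j0)\<bar> * \<bar>v l\<bar> \<le> \<bar>W (l, j0)\<bar> * M" using Mge l by (simp add: mult_left_mono)
      also have "\<dots> < (1 / real D) * M" using b l j0 Mp by (intro mult_strict_right_mono) auto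
      finally show "\<bar>W (l, j0)\<bar> * \<bar>v l\<bar> < (1 / real D) * M" .
    qed (use D in auto)
    also have "\<dots> = M" using D by simp
    finally show False by simp
  qed
  then show "\<forall>j<D. v j = 0" using Mge by (meson abs_le_zero_iff order_trans)
qed

theorem lemma3:
  fixes N D :: nat and s :: real
  assumes "0 < N" and "0 < D" and "0 < s"
    and "s < 1 / (9 * real D powr (3/2))"
  shows "measure (gauss_mat D s)
           {W \<in> space (gauss_mat D s).
              inj_on (conv_res N D (norm_adj N (complete_graph N)) W) (mats N D)}
         \<ge> 1 - exp (- real D / 2)"
proof -
  note N = assms(1) and D = assms(2) and s = assms(3) and sD = assms(4)
  define G where "G = density lborel (normal_density 0 s)"
  define I where "I = {..<D} \<times> {..<D}"
  define t where "t = 1 / real D"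
  have Gp: "prob_space G" unfolding G_def by (rule prob_space_normal_density[OF s])
  interpret Gp: prob_space G by (rule Gp)
  have fI: "finite I" by (simp add: I_def)
  interpret P: finite_product_prob_space "\<lambda>_. G" I
    apply unfold_locales
    using fI Gp s by (auto intro: prob_space_imp_sigma_finite)
  have gm: "gauss_mat D s = PiM I (\<lambda>_. G)" by (simp add: gauss_mat_def G_def I_def)
  define E where "E = {W \<in> space (gauss_mat D s).
              inj_on (conv_res N D (norm_adj N (complete_graph N)) W) (mats N D)}"
  have E_eq: "E = {W \<in> space (gauss_mat D s). det (Mt D W) \<noteq> 0}"
    unfolding E_def using inj_iff_Pker[OF N] Pker_det by auto
  have E_sets: "E \<in> sets (gauss_mat D s)"
    unfolding E_eq using det_Mt_meas[of D s] by measurable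
  define B where "B = PiE I (\<lambda>_. {x::real. \<bar>x\<bar> < t})"
  have BE: "B \<subseteq> E"
  proof
    fix W assume W: "W \<in> B"
    have "W \<in> space (gauss_mat D s)" using W unfolding gm B_def
      by (auto simp: space_PiM G_def)
    moreover have "\<forall>l<D. \<forall>j<D. \<bar>W (l, j)\<bar> < 1 / real D"
      using W by (auto simp: B_def I_def t_def)
    then have "Pker D W" by (rule box_Pker[OF D])
    ultimately show "W \<in> E" unfolding E_def using inj_iff_Pker[OF N] by auto
  qed
  have Aset: "{x::real. \<bar>x\<bar> < t} \<in> sets G" unfolding G_def by simp
  have mB: "measure (gauss_mat D s) B = measure G {x. \<bar>x\<bar> < t} ^ (D * D)"
    unfolding gm B_def using P.finite_measure_PiM_emb[of "\<lambda>_. {x. \<bar>x\<bar> < t}"] Aset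
    by (simp add: I_def)
  define r where "r = measure G {x. t \<le> \<bar>x\<bar>}"
  have q: "measure G {x. \<bar>x\<bar> < t} = 1 - r"
  proof -
    have "{x::real. \<bar>x\<bar> < t} = space G - {x. t \<le> \<bar>x\<bar>}" by (auto simp: G_def)
    moreover have "{x::real. t \<le> \<bar>x\<bar>} \<in> sets G" unfolding G_def by simp
    ultimately show ?thesis unfolding r_def by (simp add: Gp.prob_compl)
  qed
  have r1: "r \<le> 1" unfolding r_def by simp
  have rb: "r \<le> (fact (2 * D) / ((2 / s\<^sup>2)^D * fact D)) / (1 / real D) ^ (2*D)"
    unfolding r_def G_def t_def using tail[OF s _ D, of "1 / real D"] D by simp
  have "1 - real (D * D) * r \<le> (1 - r) ^ (D * D)"
    using Bernoulli_inequality[of "- r" "D * D"] r1 by simp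
  also have "\<dots> = measure (gauss_mat D s) B" using mB q by simp
  also have "\<dots> \<le> measure (gauss_mat D s) E"
    using BE E_sets by (intro P.finite_measure_mono[unfolded gm[symmetric]]) auto
  finally have "1 - real (D * D) * r \<le> measure (gauss_mat D s) E" .
  moreover have "real (D * D) * r \<le> exp (- real D / 2)" by (rule numeric[OF D s sD _ rb]) (simp add: r_def)
  ultimately show ?thesis unfolding E_def by linarith
qed

end
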